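(* Let $(M_N)_{N\ge1}$ be probability measures, $M_N$ on $\mathbb{Y}(N)$, whose Jack generating functions $F_N(\mathbf p;\theta)=\sum_{\lambda\in\mathbb Y}a_{M_N}(\lambda)p_\lambda$ satisfy Assumption A with constant $\varepsilon>0$. Then for every fixed $r\ge1$ and every $N$, the series $$\sum_{i_1,\dots,i_r\ge1}\left|\frac{\partial^r\ln F_N(\mathbf p;\theta)}{\partial p_{i_1}\cdots\partial p_{i_r}}\Big|_{\mathbf p=1^N}\right|\,|x|^{i_1+\dots+i_r}$$ converges absolutely for all complex $x$ with $|x|<1+\varepsilon$.
   Context: Fix $\theta>0$. A Young diagram is a nonincreasing sequence $\lambda=(\lambda_1\ge\lambda_2\ge\dots\ge0)$ of integers with finitely many nonzero parts; $\ell(\lambda)$ is the number of nonzero parts, $|\lambda|=\sum_i\lambda_i$, $\mathbb Y(N)$ is the set of Young diagrams with $\ell(\lambda)\le N$, $\mathbb Y=\bigcup_N\mathbb Y(N)$. Symmetric functions in infinitely many variables $x_1,x_2,\dots$ are identified with $\mathbb R[p_1,p_2,\dots]$, $p_n=\sum_i x_i^n$, $p_\lambda=\prod_i p_{\lambda_i}$. $J_\lambda(\mathbf p;\theta)$ is the Jack symmetric function: the family is orthogonal for $\langle p_\lambda,p_\mu\rangle=\delta_{\lambda\mu}z_\lambda\theta^{-\ell(\lambda)}$ ($z_\lambda=\prod_i i^{m_i}m_i!$, $m_i$ = number of parts equal to $i$), $J_\lambda$ is a combination of monomial symmetric functions $m_\mu$ with $\mu$ below $\lambda$ in dominance order, and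 its leading term is $x_1^{\lambda_1}\cdots x_{\ell(\lambda)}^{\lambda_{\ell(\lambda)}}$. "$\mathbf p=1^N$" means $x_1=\dots=x_N=1$, $x_{N+1}=x_{N+2}=\dots=0$, i.e. $p_n=N$ for all $n$; $J_\lambda(1^N;\theta)>0$ for $\lambda\in\mathbb Y(N)$. The Jack generating function of a probability measure $M_N$ on $\mathbb Y(N)$ is $F_N(\mathbf p;\theta)=\sum_{\lambda\in\mathbb Y(N)}M_N(\lambda)J_\lambda(\mathbf p;\theta)/J_\lambda(1^N;\theta)$, expanded as a formal series $\sum_{\lambda\in\mathbb Y}a_{M_N}(\lambda)p_\lambda$; $F_N|_{\mathbf p=1^N}=1$ and $\ln F_N$ is understood as a series around $\mathbf p=1^N$. Assumption A: there is $\varepsilon>0$ such that for every $N$ the series $\sum_{\lambda\in\mathbb Y}|a_{M_N}(\lambda)|N^{\ell(\lambda)}|x|^{|\lambda|}$ converges for all complex $|x|<1+\varepsilon$. *)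

theory Defs
  imports "HOL-Analysis.Analysis" "HOL-Library.Multiset"
    "HOL-Probability.Probability_Mass_Function"
begin

definition is_partition :: "nat list \<Rightarrow> bool" where
  "is_partition l \<longleftrightarrow> sorted_wrt (\<ge>) l \<and> 0 \<notin> set l"

definition young :: "nat \<Rightarrow> nat list \<Rightarrow> bool" where
  "young N l \<longleftrightarrow> is_partition l \<and> length l \<le> N"

definition partitions_of :: "nat \<Rightarrow> nat list set" where
  "partitions_of n = {l. is_partition l \<and> sum_list l = n}"

text \<open>A symmetric function is represented by its coefficients \<open>f \<mu>\<close> in the
basis \<open>p_\<mu>\<close> (only partitions \<open>\<mu>\<close> are relevant).\<close>

definition zee :: "nat list \<Rightarrow> real" where
  "zee mu = (\<Prod>i\<in>set mu. real i ^ count (mset mu) i * fact (count (mset mu) i))"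

definition jack_ip :: "real \<Rightarrow> nat \<Rightarrow> (nat list \<Rightarrow> real) \<Rightarrow> (nat list \<Rightarrow> real) \<Rightarrow> real" where
  "jack_ip \<theta> n f g = (\<Sum>mu\<in>partitions_of n. f mu * g mu * zee mu / \<theta> ^ length mu)"

definition psum_eval :: "nat \<Rightarrow> (nat \<Rightarrow> real) \<Rightarrow> nat list \<Rightarrow> real" where
  "psum_eval K x mu = (\<Prod>j\<leftarrow>mu. (\<Sum>i<K. x i ^ j))"

definition sym_eval :: "nat \<Rightarrow> (nat list \<Rightarrow> real) \<Rightarrow> (nat \<Rightarrow> real) \<Rightarrow> real" where
  "sym_eval K f x = (\<Sum>mu\<in>{mu. is_partition mu \<and> f mu \<noteq> 0}. f mu * psum_eval K x mu)"

definition monomial_exps :: "nat \<Rightarrow> nat list \<Rightarrow> (nat \<Rightarrow> nat) set" where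
  "monomial_exps K mu = {\<alpha>. (\<forall>i\<ge>K. \<alpha> i = 0) \<and>
      mset (filter (\<lambda>v. v \<noteq> 0) (map \<alpha> [0..<K])) = mset mu}"

definition mono_sym :: "nat \<Rightarrow> nat list \<Rightarrow> (nat \<Rightarrow> real) \<Rightarrow> real" where
  "mono_sym K mu x = (\<Sum>\<alpha>\<in>monomial_exps K mu. \<Prod>i<K. x i ^ \<alpha> i)"

text \<open>\<open>dominates lam mu\<close>: \<open>mu\<close> is below \<open>lam\<close> in dominance order.\<close>
definition dominates :: "nat list \<Rightarrow> nat list \<Rightarrow> bool" where
  "dominates lam mu \<longleftrightarrow> sum_list mu = sum_list lam \<and>
     (\<forall>k. sum_list (take k mu) \<le> sum_list (take k lam))"

definition is_jack_family :: "real \<Rightarrow> (nat list \<Rightarrow> nat list \<Rightarrow> real) \<Rightarrow> bool" where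
  "is_jack_family \<theta> J \<longleftrightarrow>
     (\<forall>lam. \<not> is_partition lam \<longrightarrow> J lam = (\<lambda>_. 0)) \<and>
     (\<forall>lam. is_partition lam \<longrightarrow>
        (\<forall>mu. J lam mu \<noteq> 0 \<longrightarrow> mu \<in> partitions_of (sum_list lam)) \<and>
        (\<exists>c. c lam = 1 \<and>
           (\<forall>K x. sym_eval K (J lam) x =
              (\<Sum>mu\<in>{mu\<in>partitions_of (sum_list lam). dominates lam mu}. c mu * mono_sym K mu x))) \<and>
        (\<forall>mu. mu \<in> partitions_of (sum_list lam) \<and> mu \<noteq> lam \<longrightarrow>
           jack_ip \<theta> (sum_list lam) (J lam) (J mu) = 0))"

text \<open>\<open>jack \<theta> lam\<close> = coefficients of \<open>J_lam(p;\<theta>)\<close> in the power-sum basis.\<close>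
definition jack :: "real \<Rightarrow> nat list \<Rightarrow> nat list \<Rightarrow> real" where
  "jack \<theta> = (THE J. is_jack_family \<theta> J)"

definition jack_at_ones :: "real \<Rightarrow> nat \<Rightarrow> nat list \<Rightarrow> real" where
  "jack_at_ones \<theta> N lam = sym_eval N (jack \<theta> lam) (\<lambda>_. 1)"

definition jack_gf_coeff :: "real \<Rightarrow> nat list pmf \<Rightarrow> nat \<Rightarrow> nat list \<Rightarrow> real" where
  "jack_gf_coeff \<theta> M N mu =
     (\<Sum>\<^sub>\<infinity>lam\<in>{lam. young N lam}. pmf M lam * jack \<theta> lam mu / jack_at_ones \<theta> N lam)"

text \<open>A multiset \<open>A\<close> of indices encodes the differential operator
\<open>\<partial>^r/\<partial>p_{i_1}\<dots>\<partial>p_{i_r}\<close>.  \<open>gf_deriv a N A\<close> is this derivative of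
\<open>F = \<Sum>_\<lambda> a(\<lambda>) p_\<lambda>\<close> evaluated at \<open>p_n = N\<close> for all n (termwise).\<close>
definition gf_deriv :: "(nat list \<Rightarrow> real) \<Rightarrow> nat \<Rightarrow> nat multiset \<Rightarrow> real" where
  "gf_deriv a N A = (\<Sum>\<^sub>\<infinity>lam\<in>{lam. is_partition lam \<and> A \<subseteq># mset lam}.
      a lam * (\<Prod>n\<in>set_mset A. fact (count (mset lam) n) / fact (count (mset lam) n - count A n))
        * real N ^ (length lam - size A))"

definition mfact :: "nat multiset \<Rightarrow> real" where
  "mfact A = (\<Prod>n\<in>set_mset A. fact (count A n))"

text \<open>Taylor coefficient of \<open>F\<close> at \<open>1^N\<close> (in the variables \<open>q_n = p_n - N\<close>).\<close>
definition gf_taylor :: "(nat list \<Rightarrow> real) \<Rightarrow> nat \<Rightarrow> nat multiset \<Rightarrow> real" where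
  "gf_taylor a N A = gf_deriv a N A / mfact A"

text \<open>Derivative at \<open>1^N\<close> of \<open>ln F\<close>, \<open>ln F\<close> taken as the formal series
\<open>ln c_0 + \<Sum>_{k\<ge>1} (-1)^{k-1}/k ((F - c_0)/c_0)^k\<close> around \<open>p = 1^N\<close>
(here \<open>c_0 = F(1^N)\<close>); valid for a nonempty index multiset A.\<close>
definition log_gf_deriv :: "(nat list \<Rightarrow> real) \<Rightarrow> nat \<Rightarrow> nat multiset \<Rightarrow> real" where
  "log_gf_deriv a N A = mfact A *
     (\<Sum>k\<in>{1..size A}. (-1) ^ (k - 1) / real k *
        (\<Sum>Bs\<in>{Bs. length Bs = k \<and> (\<forall>B\<in>set Bs. B \<noteq> {#}) \<and> sum_list Bs = A}.
           (\<Prod>B\<leftarrow>Bs. gf_taylor a N B / gf_taylor a N {#})))"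

end

theory Submission imports Defs begin

lemma fact_ratio_le: "r \<le> n \<Longrightarrow> (fact n :: real) / fact (n - r) \<le> real n ^ r"
proof -
  assume h: "r \<le> n"
  have "fact (n - r) dvd (fact n :: nat)" by (simp add: fact_dvd)
  then have "(fact n :: nat) = fact n div fact (n - r) * fact (n - r)" by simp
  also have "\<dots> \<le> n ^ r * fact (n - r)" using fact_div_fact_le_pow[OF h] by simp
  finally have "real (fact n) \<le> real (n ^ r * fact (n - r))" by linarith
  then have "(fact n :: real) \<le> real n ^ r * fact (n - r)" by (simp add: of_nat_fact)
  then show ?thesis by (simp add: divide_le_eq)
qed

lemma size_eq_sum_count: "size B = (\<Sum>n\<in>set_mset B. count B n)"
  by (simp add: size_multiset_overloaded_eq)

lemma len_le_sum: "is_partition l \<Longrightarrow> length l \<le> sum_list l"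
  unfolding is_partition_def
proof (induction l)
  case Nil then show ?case by simp
next
  case (Cons a l)
  then show ?case by (auto simp: Suc_le_eq)
qed

lemma sum_mset_mono_sub: "B \<subseteq># (A::nat multiset) \<Longrightarrow> sum_mset B \<le> sum_mset A"
  by (metis le_add1 subset_mset.add_diff_inverse sum_mset.union)

lemma mem_sum_list_sub: "B \<in> set Bs \<Longrightarrow> B \<subseteq># sum_list Bs"
  by (induction Bs) (auto intro: subset_mset.add_increasing2 subset_mset.add_increasing)

lemma sub_subseqs: "B \<subseteq># mset xs \<Longrightarrow> B \<in> mset ` set (subseqs xs)"
proof (induction xs arbitrary: B)
  case Nil then show ?case by simp
next
  case (Cons x xs)
  show ?case
  proof (cases "x \<in># B")
    case True
    then have "B - {#x#} \<subseteq># mset xs" using Cons.prems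
      by (metis insert_DiffM add_mset_remove_trivial insert_subset_eq_iff mset.simps(2))
    from Cons.IH[OF this] obtain ys where "ys \<in> set (subseqs xs)" "mset ys = B - {#x#}" by auto
    then show ?thesis using True
      by (auto simp: Let_def image_iff intro!: bexI[of _ "x#ys"])
  next
    case False
    then have "B \<subseteq># mset xs" using Cons.prems
      by (metis mset.simps(2) inter_add_left1 subset_mset.inf.absorb_iff2)
    from Cons.IH[OF this] show ?thesis by (auto simp: Let_def)
  qed
qed

lemma card_sub_mset: "card {B. B \<subseteq># mset xs} \<le> 2 ^ length xs"
proof -
  have "card {B. B \<subseteq># mset xs} \<le> card (mset ` set (subseqs xs))"
    by (rule card_mono) (auto intro: sub_subseqs)
  also have "\<dots> \<le> card (set (subseqs xs))" by (rule card_image_le) simp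
  also have "\<dots> \<le> length (subseqs xs)" by (rule card_length)
  finally show ?thesis by (simp add: length_subseqs)
qed

lemma fin_sub_mset: "finite {B. B \<subseteq># (A::'a multiset)}"
proof -
  obtain xs where "A = mset xs" using ex_mset by metis
  then show ?thesis
    by (metis (mono_tags, lifting) finite_imageI finite_set finite_subset mem_Collect_eq sub_subseqs subsetI)
qed

lemma lists_prod_sum: "finite S \<Longrightarrow>
  (\<Sum>is\<in>{is. set is \<subseteq> S \<and> length is = r}. (\<Prod>i\<leftarrow>is. f i)) = (sum f S :: real) ^ r"
proof (induction r)
  case 0
  have "{is. set is \<subseteq> S \<and> length is = 0} = {[]}" by auto
  then show ?case by simp
next
  case (Suc r)
  have "(\<Sum>is\<in>{is. set is \<subseteq> S \<and> length is = Suc r}. (\<Prod>i\<leftarrow>is. f i))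
     = (\<Sum>p\<in>{is. set is \<subseteq> S \<and> length is = r} \<times> S. (\<Prod>i\<leftarrow>snd p # fst p. f i))"
    unfolding lists_length_Suc_eq
    by (subst sum.reindex) (auto simp: inj_on_def case_prod_beta)
  also have "\<dots> = (\<Sum>xs\<in>{is. set is \<subseteq> S \<and> length is = r}. \<Sum>x\<in>S. f x * (\<Prod>i\<leftarrow>xs. f i))"
    by (simp add: sum.cartesian_product case_prod_beta)
  also have "\<dots> = sum f S * (\<Sum>xs\<in>{is. set is \<subseteq> S \<and> length is = r}. (\<Prod>i\<leftarrow>xs. f i))"
    by (simp add: sum_distrib_left sum_distrib_right sum.swap[of _ S])
  finally show ?case using Suc by simp
qed

lemma pow_sum_list: "(q::real) ^ sum_list is = (\<Prod>i\<leftarrow>is. q ^ i)"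
  by (induction "is") (auto simp: power_add)


lemma lin_exp_bound:
  assumes "(\<sigma>::real) > 1" shows "\<exists>C\<ge>1. \<forall>n. real n \<le> C * \<sigma> ^ n"
proof -
  have "norm (1/\<sigma>) < 1" using assms by simp
  from powser_times_n_limit_0[OF this] have "Bseq (\<lambda>n. of_nat n * (1/\<sigma>) ^ n)"
    by (rule convergent_imp_Bseq[OF convergentI])
  then obtain K where K: "K > 0" "\<And>n. norm (of_nat n * (1/\<sigma>) ^ n :: real) \<le> K"
    by (auto simp: Bseq_def)
  have "real n \<le> max 1 K * \<sigma> ^ n" for n
  proof -
    have "real n / \<sigma> ^ n \<le> K" using K(2)[of n] assms by (simp add: power_one_over field_simps)
    then have "real n \<le> K * \<sigma> ^ n" using assms by (simp add: divide_le_eq)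
    also have "\<dots> \<le> max 1 K * \<sigma> ^ n" using assms by (intro mult_right_mono) auto
    finally show ?thesis .
  qed
  then show ?thesis by (intro exI[of _ "max 1 K"]) auto
qed

lemma prod_ratio_bound:
  assumes "B \<subseteq># mset lam"
  shows "(\<Prod>n\<in>set_mset B. fact (count (mset lam) n) / fact (count (mset lam) n - count B n) :: real)
     \<le> real (length lam) ^ size B"
proof -
  have "(\<Prod>n\<in>set_mset B. fact (count (mset lam) n) / fact (count (mset lam) n - count B n) :: real)
     \<le> (\<Prod>n\<in>set_mset B. real (length lam) ^ count B n)"
  proof (rule prod_mono, rule conjI)
    fix n assume "n \<in> set_mset B"
    have c1: "count B n \<le> count (mset lam) n" using assms by (simp add: subseteq_mset_def)
    have c2: "count (mset lam) n \<le> length lam" by (metis count_le_size size_mset)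
    show "0 \<le> (fact (count (mset lam) n) / fact (count (mset lam) n - count B n) :: real)" by simp
    have "(fact (count (mset lam) n) / fact (count (mset lam) n - count B n) :: real)
       \<le> real (count (mset lam) n) ^ count B n" by (rule fact_ratio_le[OF c1])
    also have "\<dots> \<le> real (length lam) ^ count B n" using c2 by (intro power_mono) auto
    finally show "(fact (count (mset lam) n) / fact (count (mset lam) n - count B n) :: real)
       \<le> real (length lam) ^ count B n" .
  qed
  also have "\<dots> = real (length lam) ^ size B" by (simp add: power_sum size_eq_sum_count)
  finally show ?thesis .
qed

lemma gf_deriv_bound:
  fixes a :: "nat list \<Rightarrow> real"
  assumes N: "N \<ge> 1" and w: "1 \<le> w" and \<sigma>: "1 \<le> \<sigma>" and C: "1 \<le> C"
    and lin: "\<And>n. real n \<le> C * \<sigma> ^ n" and ww: "\<sigma> ^ r * w \<le> w'"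
    and summ: "(\<lambda>mu. \<bar>a mu\<bar> * real N ^ length mu * w' ^ sum_list mu) summable_on {mu. is_partition mu}"
    and B: "size B \<le> r"
  shows "\<bar>gf_deriv a N B\<bar> * w ^ sum_mset B
     \<le> C ^ r * (\<Sum>\<^sub>\<infinity>mu\<in>{mu. is_partition mu}. \<bar>a mu\<bar> * real N ^ length mu * w' ^ sum_list mu)"
proof -
  define P where "P = {lam. is_partition lam \<and> B \<subseteq># mset lam}"
  define h where "h = (\<lambda>mu. \<bar>a mu\<bar> * real N ^ length mu * w' ^ sum_list mu)"
  define f where "f = (\<lambda>lam. a lam * (\<Prod>n\<in>set_mset B. fact (count (mset lam) n) / fact (count (mset lam) n - count B n))
        * real N ^ (length lam - size B))"
  define c where "c = C ^ r / w ^ sum_mset B"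
  have wpos: "w > 0" using w by simp
  have cpos: "c \<ge> 0" unfolding c_def using C wpos by simp
  have key: "\<bar>f lam\<bar> \<le> h lam * c" if lam: "lam \<in> P" for lam
  proof -
    have part: "is_partition lam" and sub: "B \<subseteq># mset lam" using lam by (auto simp: P_def)
    define ell where "ell = length lam"
    define s where "s = sum_list lam"
    have pr0: "0 \<le> (\<Prod>n\<in>set_mset B. fact (count (mset lam) n) / fact (count (mset lam) n - count B n) :: real)"
      by (intro prod_nonneg) simp
    have pr: "(\<Prod>n\<in>set_mset B. fact (count (mset lam) n) / fact (count (mset lam) n - count B n) :: real)
        \<le> real ell ^ size B" unfolding ell_def by (rule prod_ratio_bound[OF sub])
    have Npow: "real N ^ (ell - size B) \<le> real N ^ ell" using N by (intro power_increasing) auto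
    have "sum_mset B \<le> sum_mset (mset lam)" by (rule sum_mset_mono_sub[OF sub])
    then have sB: "sum_mset B \<le> s" unfolding s_def by (simp add: sum_mset_sum_list)
    have wB: "w ^ sum_mset B \<le> w ^ s" using w sB by (intro power_increasing) auto
    have ls: "real ell \<le> C * \<sigma> ^ s" using len_le_sum[OF part] lin[of s] unfolding ell_def s_def by linarith
    have ge1: "1 \<le> C * \<sigma> ^ s" using mult_mono[of 1 C 1 "\<sigma>^s"] C one_le_power[OF \<sigma>, of s] by simp
    have "real ell ^ size B \<le> (C * \<sigma> ^ s) ^ size B" using ls by (intro power_mono) auto
    also have "\<dots> \<le> (C * \<sigma> ^ s) ^ r" using ge1 B by (intro power_increasing) auto
    finally have lk: "real ell ^ size B \<le> C ^ r * (\<sigma> ^ r) ^ s"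
      by (simp add: power_mult_distrib power_mult[symmetric] mult.commute)
    have "\<bar>f lam\<bar> * w ^ sum_mset B = \<bar>a lam\<bar> * (\<Prod>n\<in>set_mset B. fact (count (mset lam) n) / fact (count (mset lam) n - count B n))
        * real N ^ (ell - size B) * w ^ sum_mset B"
      unfolding f_def ell_def using pr0 by (simp add: abs_mult)
    also have "\<dots> \<le> \<bar>a lam\<bar> * (real ell ^ size B) * real N ^ ell * w ^ s"
      using pr pr0 Npow wB wpos by (intro mult_mono) auto
    also have "\<dots> \<le> \<bar>a lam\<bar> * (C ^ r * (\<sigma> ^ r) ^ s) * real N ^ ell * w ^ s"
      using lk C \<sigma> wpos by (intro mult_mono) auto
    also have "\<dots> = C ^ r * (\<bar>a lam\<bar> * real N ^ ell * (\<sigma> ^ r * w) ^ s)"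
      by (simp add: power_mult_distrib)
    also have "\<dots> \<le> C ^ r * (\<bar>a lam\<bar> * real N ^ ell * w' ^ s)"
      using ww \<sigma> wpos C by (intro mult_left_mono power_mono) auto
    finally have "\<bar>f lam\<bar> * w ^ sum_mset B \<le> C ^ r * h lam" unfolding h_def ell_def s_def by simp
    then show ?thesis unfolding c_def using wpos by (simp add: field_simps)
  qed
  have hP: "h summable_on P" using summ unfolding h_def P_def
    by (rule summable_on_subset_banach) auto
  have hcP: "(\<lambda>x. h x * c) summable_on P" by (rule summable_on_cmult_left[OF hP])
  have w'pos: "w' \<ge> 0" using ww \<sigma> wpos by (smt (verit) mult_nonneg_nonneg zero_le_power)
  have hnn: "h x * c \<ge> 0" for x unfolding h_def using cpos w'pos by simp
  have nh: "(\<lambda>x. norm (h x * c)) = (\<lambda>x. h x * c)"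
    using hnn by (intro ext) simp
  have hcabs: "(\<lambda>x. norm (h x * c)) summable_on P"
  proof (subst summable_on_cong)
    fix x show "norm (h x * c) = h x * c" using hnn[of x] by (simp only: real_norm_def abs_of_nonneg)
  qed (rule hcP)
  have fabs: "(\<lambda>x. norm (f x)) summable_on P"
  proof (rule Infinite_Sum.abs_summable_on_comparison_test[OF hcabs])
    fix x assume "x \<in> P"
    then show "norm (f x) \<le> norm (h x * c)" using key[of x] hnn[of x] by simp
  qed
  have "\<bar>gf_deriv a N B\<bar> = norm (infsum f P)" unfolding gf_deriv_def f_def P_def by simp
  also have "\<dots> \<le> infsum (\<lambda>x. norm (f x)) P" by (rule norm_infsum_bound[OF fabs])
  also have "\<dots> \<le> infsum (\<lambda>x. h x * c) P" using fabs hcP key by (intro infsum_mono) auto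
  also have "\<dots> \<le> infsum (\<lambda>x. h x * c) {mu. is_partition mu}"
    using hcP summable_on_cmult_left[OF summ[folded h_def], of c] cpos w'pos
    by (intro infsum_mono_neutral) (auto simp: P_def h_def)
  also have "\<dots> = infsum h {mu. is_partition mu} * c" by (rule infsum_cmult_left') 
  finally show ?thesis unfolding c_def h_def using wpos by (simp add: field_simps)
qed


lemma card_set_mset_le_size: "card (set_mset A) \<le> size A"
proof -
  have "card (set_mset A) = (\<Sum>n\<in>set_mset A. 1)" by simp
  also have "\<dots> \<le> (\<Sum>n\<in>set_mset A. count A n)" by (intro sum_mono) (simp add: Suc_le_eq)
  finally show ?thesis by (simp add: size_eq_sum_count)
qed

lemma mfact_le: "mfact A \<le> fact (size A) ^ size A"
proof -
  have "mfact A \<le> (\<Prod>n\<in>set_mset A. fact (size A))"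
    unfolding mfact_def by (intro prod_mono) (auto intro: fact_mono count_le_size)
  also have "\<dots> = fact (size A) ^ card (set_mset A)" by simp
  also have "\<dots> \<le> fact (size A) ^ size A"
    by (intro power_increasing card_set_mset_le_size) simp
  finally show ?thesis .
qed

lemma mfact_ge1: "1 \<le> mfact A"
  unfolding mfact_def by (intro prod_ge_1) simp

lemma prod_bound:
  fixes T :: "nat multiset \<Rightarrow> real"
  assumes "\<And>B. B \<in> set Bs \<Longrightarrow> \<bar>T B\<bar> * w ^ sum_mset B \<le> K" and w: "w > 0"
  shows "\<bar>\<Prod>B\<leftarrow>Bs. T B / c\<bar> * w ^ sum_mset (sum_list Bs) \<le> (max 1 (K / \<bar>c\<bar>)) ^ length Bs"
  using assms(1)
proof (induction Bs)
  case Nil then show ?case by simp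
next
  case (Cons B Bs)
  define K' where "K' = max 1 (K / \<bar>c\<bar>)"
  have IH: "\<bar>\<Prod>B\<leftarrow>Bs. T B / c\<bar> * w ^ sum_mset (sum_list Bs) \<le> K' ^ length Bs"
    using Cons unfolding K'_def by auto
  have h1: "\<bar>T B\<bar> * w ^ sum_mset B \<le> K" using Cons.prems by auto
  have h2: "\<bar>T B / c\<bar> * w ^ sum_mset B \<le> K'"
  proof (cases "c = 0")
    case True then show ?thesis unfolding K'_def by simp
  next
    case False
    then have "\<bar>T B / c\<bar> * w ^ sum_mset B = (\<bar>T B\<bar> * w ^ sum_mset B) / \<bar>c\<bar>" by (simp add: abs_divide)
    also have "\<dots> \<le> K / \<bar>c\<bar>" using h1 False by (simp add: divide_right_mono)
    finally show ?thesis unfolding K'_def by simp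
  qed
  have "\<bar>\<Prod>B\<leftarrow>B#Bs. T B / c\<bar> * w ^ sum_mset (sum_list (B#Bs))
      = (\<bar>T B / c\<bar> * w ^ sum_mset B) * (\<bar>\<Prod>B\<leftarrow>Bs. T B / c\<bar> * w ^ sum_mset (sum_list Bs))"
    by (simp add: abs_mult power_add)
  also have "\<dots> \<le> K' * K' ^ length Bs"
    using h2 IH w by (intro mult_mono) (auto simp: K'_def)
  finally show ?case unfolding K'_def by simp
qed

lemma log_bound:
  fixes a :: "nat list \<Rightarrow> real"
  assumes A: "size A = r" and w: "w > 0" and K: "K \<ge> 0"
    and TB: "\<And>B. size B \<le> r \<Longrightarrow> \<bar>gf_taylor a N B\<bar> * w ^ sum_mset B \<le> K"
    and card: "card {B. B \<subseteq># A} \<le> 2 ^ r"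
  shows "\<bar>log_gf_deriv a N A\<bar> * w ^ sum_mset A
     \<le> fact r ^ r * (\<Sum>k\<in>{1..r}. (2 ^ r) ^ k * (max 1 (K / \<bar>gf_taylor a N {#}\<bar>)) ^ k)"
proof -
  define c where "c = gf_taylor a N {#}"
  define K' where "K' = max 1 (K / \<bar>c\<bar>)"
  define S where "S = (\<lambda>k. {Bs. length Bs = k \<and> (\<forall>B\<in>set Bs. B \<noteq> {#}) \<and> sum_list Bs = A})"
  define X where "X = (\<lambda>k. \<Sum>Bs\<in>S k. \<Prod>B\<leftarrow>Bs. gf_taylor a N B / c)"
  define W where "W = w ^ sum_mset A"
  have Wpos: "W > 0" unfolding W_def using w by simp
  have Xb: "\<bar>X k\<bar> * W \<le> (2 ^ r) ^ k * K' ^ k" for k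
  proof -
    have "\<bar>X k\<bar> \<le> (\<Sum>Bs\<in>S k. \<bar>\<Prod>B\<leftarrow>Bs. gf_taylor a N B / c\<bar>)"
      unfolding X_def by (rule sum_abs)
    then have "\<bar>X k\<bar> * W \<le> (\<Sum>Bs\<in>S k. \<bar>\<Prod>B\<leftarrow>Bs. gf_taylor a N B / c\<bar>) * W"
      using Wpos by (intro mult_right_mono) auto
    also have "\<dots> = (\<Sum>Bs\<in>S k. \<bar>\<Prod>B\<leftarrow>Bs. gf_taylor a N B / c\<bar> * W)"
      by (rule sum_distrib_right)
    finally have "\<bar>X k\<bar> * W \<le> (\<Sum>Bs\<in>S k. \<bar>\<Prod>B\<leftarrow>Bs. gf_taylor a N B / c\<bar> * W)" .
    also have "\<dots> \<le> of_nat (card (S k)) * K' ^ k"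
    proof (rule sum_bounded_above)
      fix Bs assume Bs: "Bs \<in> S k"
      then have eq: "sum_list Bs = A" and len: "length Bs = k" by (auto simp: S_def)
      have "\<bar>gf_taylor a N B\<bar> * w ^ sum_mset B \<le> K" if "B \<in> set Bs" for B
      proof (rule TB)
        have "B \<subseteq># A" using mem_sum_list_sub[OF that] eq by simp
        then show "size B \<le> r" using A by (metis size_mset_mono)
      qed
      from prod_bound[of Bs "gf_taylor a N", OF this w, of c]
      show "\<bar>\<Prod>B\<leftarrow>Bs. gf_taylor a N B / c\<bar> * W \<le> K' ^ k"
        unfolding W_def K'_def using eq len by simp
    qed
    also have "\<dots> \<le> (2 ^ r) ^ k * K' ^ k"
    proof -
      have "S k \<subseteq> {Bs. set Bs \<subseteq> {B. B \<subseteq># A} \<and> length Bs = k}"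
        unfolding S_def using mem_sum_list_sub by fastforce
      then have "card (S k) \<le> card {Bs. set Bs \<subseteq> {B. B \<subseteq># A} \<and> length Bs = k}"
        by (intro card_mono finite_lists_length_eq fin_sub_mset)
      also have "\<dots> = card {B. B \<subseteq># A} ^ k" by (intro card_lists_length_eq fin_sub_mset)
      also have "\<dots> \<le> (2 ^ r) ^ k" using card by (intro power_mono) auto
      finally have "real (card (S k)) \<le> (2 ^ r) ^ k" by (metis of_nat_le_iff of_nat_numeral of_nat_power)
      then show ?thesis unfolding K'_def by (intro mult_right_mono) auto
    qed
    finally show ?thesis .
  qed
  have ld: "log_gf_deriv a N A = mfact A * (\<Sum>k\<in>{1..r}. (-1) ^ (k - 1) / real k * X k)"
    unfolding log_gf_deriv_def X_def S_def c_def A by (rule refl)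
    
  have "\<bar>log_gf_deriv a N A\<bar> * W = mfact A * (\<bar>\<Sum>k\<in>{1..r}. (-1) ^ (k - 1) / real k * X k\<bar> * W)"
    unfolding ld abs_mult using mfact_ge1[of A] by (simp only: abs_of_nonneg[of "mfact A"] mult.assoc)
  also have "\<dots> \<le> fact r ^ r * (\<Sum>k\<in>{1..r}. (2 ^ r) ^ k * K' ^ k)"
  proof (rule mult_mono)
    show "mfact A \<le> fact r ^ r" using mfact_le[of A] A by simp
    have "\<bar>\<Sum>k\<in>{1..r}. (-1) ^ (k - 1) / real k * X k\<bar> * W \<le> (\<Sum>k\<in>{1..r}. \<bar>X k\<bar> * W)"
    proof -
      have "\<bar>\<Sum>k\<in>{1..r}. (-1) ^ (k - 1) / real k * X k\<bar> \<le> (\<Sum>k\<in>{1..r}. \<bar>(-1) ^ (k - 1) / real k * X k\<bar>)"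
        by (rule sum_abs)
      also have "\<dots> \<le> (\<Sum>k\<in>{1..r}. \<bar>X k\<bar>)"
      proof (intro sum_mono)
        fix k assume "k \<in> {1..r}"
        then have "real k \<ge> 1" by simp
        then show "\<bar>(-1) ^ (k - 1) / real k * X k\<bar> \<le> \<bar>X k\<bar>"
          by (simp add: abs_mult power_abs divide_le_eq mult_le_cancel_right1 mult.commute)
      qed
      finally have "\<bar>\<Sum>k\<in>{1..r}. (-1) ^ (k - 1) / real k * X k\<bar> * W \<le> (\<Sum>k\<in>{1..r}. \<bar>X k\<bar>) * W"
        using Wpos by (intro mult_right_mono) auto
      also have "\<dots> = (\<Sum>k\<in>{1..r}. \<bar>X k\<bar> * W)" by (rule sum_distrib_right)
      finally show ?thesis .
    qed
    also have "\<dots> \<le> (\<Sum>k\<in>{1..r}. (2 ^ r) ^ k * K' ^ k)" by (intro sum_mono Xb)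
    finally show "\<bar>\<Sum>k\<in>{1..r}. (-1) ^ (k - 1) / real k * X k\<bar> * W \<le> (\<Sum>k\<in>{1..r}. (2 ^ r) ^ k * K' ^ k)" .
  qed (use Wpos in auto)
  finally show ?thesis unfolding W_def K'_def c_def .
qed


lemma geo_lists_bound:
  fixes q D :: real
  assumes q: "0 \<le> q" "q < 1" and D: "D \<ge> 0" and F: "finite F" "F \<subseteq> {is. length is = r \<and> (\<forall>i\<in>set is. 1 \<le> i)}"
  shows "(\<Sum>is\<in>F. D * q ^ sum_list is) \<le> D * (1 / (1 - q)) ^ r"
proof -
  define m where "m = Max (insert 0 (\<Union>is\<in>F. set is))"
  define L where "L = {is. set is \<subseteq> {1..m} \<and> length is = r}"
  have fin: "finite (insert 0 (\<Union>is\<in>F. set is))" using F by auto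
  have "F \<subseteq> L"
  proof
    fix xs assume xs: "xs \<in> F"
    have "i \<le> m" if "i \<in> set xs" for i unfolding m_def using fin that xs by (intro Max_ge) auto
    then show "xs \<in> L" using F xs unfolding L_def by auto
  qed
  have "(\<Sum>is\<in>F. D * q ^ sum_list is) \<le> (\<Sum>is\<in>L. D * q ^ sum_list is)"
    using \<open>F \<subseteq> L\<close> q D by (intro sum_mono2) (auto simp: L_def finite_lists_length_eq)
  also have "\<dots> = D * (\<Sum>i\<in>{1..m}. q ^ i) ^ r"
    unfolding L_def by (simp add: sum_distrib_left[symmetric] pow_sum_list lists_prod_sum)
  also have "\<dots> \<le> D * (1 / (1 - q)) ^ r"
  proof -
    have "(\<Sum>i\<in>{1..m}. q ^ i) \<le> suminf (\<lambda>n. q ^ n)"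
      using q by (intro sum_le_suminf summable_geometric) auto
    also have "\<dots> = 1 / (1 - q)" using q by (intro suminf_geometric) auto
    finally show ?thesis using q D by (intro mult_left_mono power_mono sum_nonneg) auto
  qed
  finally show ?thesis .
qed

lemma main:
  fixes a :: "nat list \<Rightarrow> real" and y \<epsilon> :: real
  assumes eps: "\<epsilon> > 0" and N: "N \<ge> 1" and r: "r \<ge> 1" and y: "0 \<le> y" "y < 1 + \<epsilon>"
    and H: "\<And>z. 0 \<le> z \<Longrightarrow> z < 1 + \<epsilon> \<Longrightarrow>
       (\<lambda>mu. \<bar>a mu\<bar> * real N ^ length mu * z ^ sum_list mu) summable_on {mu. is_partition mu}"
  shows "(\<lambda>is. \<bar>log_gf_deriv a N (mset is)\<bar> * y ^ sum_list is)
             summable_on {is. length is = r \<and> (\<forall>i\<in>set is. 1 \<le> i)}"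
proof -
  define w where "w = max 1 ((y + 1 + \<epsilon>) / 2)"
  define w' where "w' = (w + 1 + \<epsilon>) / 2"
  have w1: "1 \<le> w" and yw: "y < w" and ww': "w < w'" and w'e: "w' < 1 + \<epsilon>"
    using y eps unfolding w_def w'_def by (auto simp: less_max_iff_disj max_def)
  define \<sigma> where "\<sigma> = root r (w' / w)"
  have rat: "w' / w > 1" using w1 ww' by simp
  have \<sigma>r: "\<sigma> ^ r = w' / w" unfolding \<sigma>_def using r rat by (intro real_root_pow_pos) auto
  have \<sigma>1: "\<sigma> > 1" unfolding \<sigma>_def using r rat by (simp add: real_root_gt_1_iff)
  obtain C where C: "C \<ge> 1" "\<And>n. real n \<le> C * \<sigma> ^ n" using lin_exp_bound[OF \<sigma>1] by blast
  have ww: "\<sigma> ^ r * w \<le> w'" using \<sigma>r w1 by simp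
  have summ: "(\<lambda>mu. \<bar>a mu\<bar> * real N ^ length mu * w' ^ sum_list mu) summable_on {mu. is_partition mu}"
    using H[of w'] w1 ww' w'e by auto
  define K where "K = C ^ r * (\<Sum>\<^sub>\<infinity>mu\<in>{mu. is_partition mu}. \<bar>a mu\<bar> * real N ^ length mu * w' ^ sum_list mu)"
  have Knn: "K \<ge> 0" unfolding K_def using C w1 ww'
    by (intro mult_nonneg_nonneg infsum_nonneg) auto
  have TB: "\<bar>gf_taylor a N B\<bar> * w ^ sum_mset B \<le> K" if "size B \<le> r" for B
  proof -
    have "\<bar>gf_taylor a N B\<bar> \<le> \<bar>gf_deriv a N B\<bar>"
      unfolding gf_taylor_def using mfact_ge1[of B]
      by (simp add: abs_divide divide_le_eq mult_le_cancel_right1 mult_le_cancel_left1)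
    then have "\<bar>gf_taylor a N B\<bar> * w ^ sum_mset B \<le> \<bar>gf_deriv a N B\<bar> * w ^ sum_mset B"
      using w1 by (intro mult_right_mono) auto
    also have "\<dots> \<le> K" unfolding K_def
      by (rule gf_deriv_bound[OF N w1 _ C ww summ that]) (use \<sigma>1 in auto)
    finally show ?thesis .
  qed
  define D where "D = fact r ^ r * (\<Sum>k\<in>{1..r}. (2 ^ r) ^ k * (max 1 (K / \<bar>gf_taylor a N {#}\<bar>)) ^ k)"
  have Dnn: "D \<ge> 0" unfolding D_def by (intro mult_nonneg_nonneg sum_nonneg) auto
  define q where "q = y / w"
  have q: "0 \<le> q" "q < 1" unfolding q_def using y yw w1 by auto
  have bound: "\<bar>log_gf_deriv a N (mset is)\<bar> * y ^ sum_list is \<le> D * q ^ sum_list is"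
    if "length is = r" for "is"
  proof -
    have lb: "\<bar>log_gf_deriv a N (mset is)\<bar> * w ^ sum_list is \<le> D"
      using log_bound[of "mset is" r w K a N, OF _ _ Knn TB] card_sub_mset[of "is"] that w1
      unfolding D_def by (simp add: sum_mset_sum_list)
    have wp: "w ^ sum_list is > 0" using w1 by simp
    have "\<bar>log_gf_deriv a N (mset is)\<bar> * y ^ sum_list is
        = (\<bar>log_gf_deriv a N (mset is)\<bar> * w ^ sum_list is) * q ^ sum_list is"
      unfolding q_def using w1 by (simp add: power_divide)
    also have "\<dots> \<le> D * q ^ sum_list is" using lb q by (intro mult_right_mono) auto
    finally show ?thesis .
  qed
  show ?thesis
  proof (rule nonneg_bdd_above_summable_on)
    show "bdd_above (sum (\<lambda>is. \<bar>log_gf_deriv a N (mset is)\<bar> * y ^ sum_list is) `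
        {F. F \<subseteq> {is. length is = r \<and> (\<forall>i\<in>set is. 1 \<le> i)} \<and> finite F})"
    proof (rule bdd_aboveI2)
      fix F :: "nat list set" assume F: "F \<in> {F. F \<subseteq> {is. length is = r \<and> (\<forall>i\<in>set is. 1 \<le> i)} \<and> finite F}"
      have "(\<Sum>is\<in>F. \<bar>log_gf_deriv a N (mset is)\<bar> * y ^ sum_list is) \<le> (\<Sum>is\<in>F. D * q ^ sum_list is)"
        using F bound by (intro sum_mono) auto
      also have "\<dots> \<le> D * (1 / (1 - q)) ^ r" using F q Dnn by (intro geo_lists_bound) auto
      finally show "(\<Sum>is\<in>F. \<bar>log_gf_deriv a N (mset is)\<bar> * y ^ sum_list is) \<le> D * (1 / (1 - q)) ^ r" .
    qed
  qed (use y in auto)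
qed

theorem proposition2p1:
  fixes \<theta> \<epsilon> :: real and M :: "nat \<Rightarrow> nat list pmf"
  assumes "\<theta> > 0" and "\<epsilon> > 0"
    and "\<forall>N\<ge>1. set_pmf (M N) \<subseteq> {lam. young N lam}"
    and "\<forall>N\<ge>1. \<forall>x::complex. cmod x < 1 + \<epsilon> \<longrightarrow>
           (\<lambda>mu. \<bar>jack_gf_coeff \<theta> (M N) N mu\<bar> * real N ^ length mu * cmod x ^ sum_list mu)
             summable_on {mu. is_partition mu}"
  shows "\<forall>r\<ge>1. \<forall>N\<ge>1. \<forall>x::complex. cmod x < 1 + \<epsilon> \<longrightarrow>
           (\<lambda>is. \<bar>log_gf_deriv (jack_gf_coeff \<theta> (M N) N) N (mset is)\<bar> * cmod x ^ sum_list is)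
             summable_on {is. length is = r \<and> (\<forall>i\<in>set is. 1 \<le> i)}"
proof (intro allI impI)
  fix r N :: nat and x :: complex
  assume r: "r \<ge> 1" and N: "N \<ge> 1" and x: "cmod x < 1 + \<epsilon>"
  show "(\<lambda>is. \<bar>log_gf_deriv (jack_gf_coeff \<theta> (M N) N) N (mset is)\<bar> * cmod x ^ sum_list is)
             summable_on {is. length is = r \<and> (\<forall>i\<in>set is. 1 \<le> i)}"
  proof (rule main[OF assms(2) N r _ x])
    fix z :: real assume z: "0 \<le> z" "z < 1 + \<epsilon>"
    have "cmod (complex_of_real z) < 1 + \<epsilon>" using z by simp
    with assms(4) N have "(\<lambda>mu. \<bar>jack_gf_coeff \<theta> (M N) N mu\<bar> * real N ^ length mu * cmod (complex_of_real z) ^ sum_list mu)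
             summable_on {mu. is_partition mu}" by blast
    then show "(\<lambda>mu. \<bar>jack_gf_coeff \<theta> (M N) N mu\<bar> * real N ^ length mu * z ^ sum_list mu)
             summable_on {mu. is_partition mu}" using z by simp
  qed simp
qed

end
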